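(* Let $\kappa$ be a Mahlo cardinal and let $A\subseteq\kappa$ be a stationary set of regular cardinals. Then $\kappa\in\operatorname{spec}(A)$.
   Context: For a set $A$ of regular cardinals, $\prod A$ is the set of functions $f$ with domain $A$ and $f(a)\in a$, ordered by pointwise domination. $\operatorname{spec}(A)$ is the set of regular cardinals $\lambda$ with $(\prod A,<)\geq_T\lambda$ in the Tukey order; equivalently, regular $\lambda$ such that there exists $\mathcal{F}\subseteq\prod A$ of size $\lambda$ such that every $\lambda$-sized subset of $\mathcal{F}$ is unbounded in $(\prod A,<)$ (i.e., not pointwise dominated by a single element of $\prod A$). *)

theory Defs
  imports "HOL-Library.FuncSet" "HOL-Library.Equipollence" "HOL-Library.Countable_Set"
begin

text \<open>Ordinals are modelled as elements of an arbitrary well-ordered type; the ordinal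
  represented by k is (the order type of) its initial segment {x. x < k}.\<close>

definition is_cardinal :: "'a::wellorder \<Rightarrow> bool" where
  "is_cardinal k \<longleftrightarrow> (\<forall>m<k. \<not> ({x. x < m} \<approx> {x. x < k}))"

definition regular :: "'a::wellorder \<Rightarrow> bool" where
  "regular k \<longleftrightarrow> is_cardinal k \<and> infinite {x. x < k} \<and>
     (\<forall>X \<subseteq> {x. x < k}. (\<forall>b<k. \<exists>x\<in>X. b \<le> x) \<longrightarrow> X \<approx> {x. x < k})"

definition club :: "'a::wellorder \<Rightarrow> 'a set \<Rightarrow> bool" where
  "club k C \<longleftrightarrow> C \<subseteq> {x. x < k} \<and> (\<forall>b<k. \<exists>c\<in>C. b \<le> c) \<and>
     (\<forall>g<k. (\<exists>c\<in>C. c < g) \<and> (\<forall>b<g. \<exists>c\<in>C. b < c \<and> c < g) \<longrightarrow> g \<in> C)"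

definition stationary :: "'a::wellorder \<Rightarrow> 'a set \<Rightarrow> bool" where
  "stationary k S \<longleftrightarrow> S \<subseteq> {x. x < k} \<and> (\<forall>C. club k C \<longrightarrow> S \<inter> C \<noteq> {})"

definition strong_limit :: "'a::wellorder \<Rightarrow> bool" where
  "strong_limit k \<longleftrightarrow> (\<forall>m<k. Pow {x. x < m} \<prec> {x. x < k})"

definition inaccessible :: "'a::wellorder \<Rightarrow> bool" where
  "inaccessible k \<longleftrightarrow> regular k \<and> uncountable {x. x < k} \<and> strong_limit k"

definition mahlo :: "'a::wellorder \<Rightarrow> bool" where
  "mahlo k \<longleftrightarrow> inaccessible k \<and> stationary k {l. l < k \<and> regular l}"

definition prodA :: "'a::wellorder set \<Rightarrow> ('a \<Rightarrow> 'a) set" where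
  "prodA A = PiE A (\<lambda>a. {x. x < a})"

definition bounded_in :: "'a::wellorder set \<Rightarrow> ('a \<Rightarrow> 'a) set \<Rightarrow> bool" where
  "bounded_in A G \<longleftrightarrow> (\<exists>g\<in>prodA A. \<forall>f\<in>G. \<forall>a\<in>A. f a < g a)"

definition spec :: "'a::wellorder set \<Rightarrow> 'a set" where
  "spec A = {l. regular l \<and> (\<exists>F \<subseteq> prodA A. F \<approx> {x. x < l} \<and>
                 (\<forall>G \<subseteq> F. G \<approx> {x. x < l} \<longrightarrow> \<not> bounded_in A G))}"

end

theory Submission
  imports Defs
begin

lemma reg_limit:
  fixes k :: "'a::wellorder"
  assumes "regular k" "b < k"
  shows "\<exists>c<k. b < c"
proof (rule ccontr)
  assume "\<not> ?thesis"
  hence "\<forall>x<k. x \<le> b" by (meson not_le)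
  moreover have "{b} \<subseteq> {x. x < k}" using assms(2) by simp
  ultimately have "{b} \<approx> {x. x < k}" using assms(1) unfolding regular_def by blast
  thus False using assms(1) unfolding regular_def using eqpoll_finite_iff by blast
qed

lemma countable_bounded:
  fixes k :: "'a::wellorder"
  assumes "regular k" "uncountable {x. x < k}" "S \<subseteq> {x. x < k}" "countable S"
  shows "\<exists>c<k. \<forall>x\<in>S. x < c"
proof (rule ccontr)
  assume "\<not> ?thesis"
  hence "\<forall>b<k. \<exists>x\<in>S. b \<le> x" by (meson not_le)
  hence "S \<approx> {x. x < k}" using assms unfolding regular_def by blast
  thus False using assms countable_eqpoll eqpoll_sym by blast
qed

lemma limit_club:
  fixes k :: "'a::wellorder"
  assumes reg: "regular k" and unc: "uncountable {x. x < k}"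
    and X: "X \<subseteq> {x. x < k}" and unb: "\<forall>b<k. \<exists>x\<in>X. b \<le> x"
  shows "club k {g. g < k \<and> (\<forall>b<g. \<exists>x\<in>X. b \<le> x \<and> x < g)}"
proof -
  define C where "C = {g. g < k \<and> (\<forall>b<g. \<exists>x\<in>X. b \<le> x \<and> x < g)}"
  have gt: "\<exists>x\<in>X. b < x" if bk: "b < k" for b
  proof -
    obtain c where "c < k" "b < c" using reg_limit[OF reg bk] by blast
    then obtain x where "x \<in> X" "c \<le> x" using unb by blast
    thus ?thesis using \<open>b < c\<close> by (meson less_le_trans)
  qed
  define phi where "phi = (\<lambda>b. LEAST x. x \<in> X \<and> b < x)"
  have phi: "phi b \<in> X \<and> b < phi b" if "b < k" for b
    unfolding phi_def using gt[OF that] by (metis (mono_tags, lifting) LeastI)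
  have unbC: "\<exists>c\<in>C. b \<le> c" if b: "b < k" for b
  proof -
    define s where "s = (\<lambda>n. (phi ^^ n) b)"
    have sk: "s n < k" for n
      by (induction n) (use b X phi in \<open>auto simp: s_def\<close>)
    have sS: "s (Suc n) = phi (s n)" for n by (simp add: s_def)
    have sX: "s (Suc n) \<in> X" "s n < s (Suc n)" for n using phi[OF sk[of n]] sS by auto
    obtain c where c: "c < k" "\<forall>x\<in>range s. x < c"
      using countable_bounded[OF reg unc, of "range s"] sk by blast
    define g where "g = (LEAST g. \<forall>n. s n \<le> g)"
    have g1: "\<forall>n. s n \<le> g" unfolding g_def
      by (rule LeastI[of _ c]) (use c in \<open>auto intro: less_imp_le\<close>)
    have gc: "g \<le> c" unfolding g_def
      by (rule Least_le) (use c in \<open>auto intro: less_imp_le\<close>)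
    have "g \<in> C" unfolding C_def
    proof (intro CollectI conjI allI impI)
      show "g < k" using gc c by auto
      fix bb assume "bb < g"
      hence "\<not> (\<forall>n. s n \<le> bb)" unfolding g_def using not_less_Least by blast
      then obtain n where n: "bb < s n" by (meson not_le)
      have "s (Suc n) < s (Suc (Suc n))" using sX by blast
      also have "\<dots> \<le> g" using g1 by blast
      finally show "\<exists>x\<in>X. bb \<le> x \<and> x < g" using sX[of n] n
        by (meson less_imp_le less_trans)
    qed
    moreover have "b \<le> g" using g1[rule_format, of 0] by (simp add: s_def)
    ultimately show ?thesis by blast
  qed
  show ?thesis unfolding club_def C_def[symmetric]
  proof (intro conjI allI impI)
    show "C \<subseteq> {x. x < k}" unfolding C_def by auto
    show "\<And>b. b < k \<Longrightarrow> \<exists>c\<in>C. b \<le> c" using unbC by blast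
    fix g assume g: "g < k" "(\<exists>c\<in>C. c < g) \<and> (\<forall>b<g. \<exists>c\<in>C. b < c \<and> c < g)"
    show "g \<in> C" unfolding C_def
    proof (intro CollectI conjI allI impI)
      show "g < k" by fact
      fix b assume "b < g"
      then obtain c where "c \<in> C" "b < c" "c < g" using g by blast
      then obtain x where "x \<in> X" "b \<le> x" "x < c" unfolding C_def by blast
      thus "\<exists>x\<in>X. b \<le> x \<and> x < g" using \<open>c < g\<close> by (meson less_trans)
    qed
  qed
qed

theorem proposition4p1:
  fixes \<kappa> :: "'a::wellorder" and A :: "'a set"
  assumes "mahlo \<kappa>"
    and "A \<subseteq> {x. x < \<kappa>}"
    and "stationary \<kappa> A"
    and "\<forall>a\<in>A. regular a"
  shows "\<kappa> \<in> spec A"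
proof -
  have reg: "regular \<kappa>" and unc: "uncountable {x. x < \<kappa>}"
    using assms(1) unfolding mahlo_def inaccessible_def by auto
  have card: "is_cardinal \<kappa>" using reg unfolding regular_def by auto
  have stat: "\<And>C. club \<kappa> C \<Longrightarrow> A \<inter> C \<noteq> {}" using assms(3) unfolding stationary_def by auto
  have Aunb: "\<exists>a\<in>A. b < a" if bk: "b < \<kappa>" for b
  proof -
    have "club \<kappa> {x. b < x \<and> x < \<kappa>}" unfolding club_def
    proof (intro conjI allI impI)
      fix c assume "c < \<kappa>"
      have "max b c < \<kappa>" using \<open>c < \<kappa>\<close> bk by simp
      then obtain d where "d < \<kappa>" "max b c < d" using reg_limit[OF reg] by blast
      thus "\<exists>x\<in>{x. b < x \<and> x < \<kappa>}. c \<le> x" by auto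
    next
      fix g assume "g < \<kappa>" "(\<exists>c\<in>{x. b < x \<and> x < \<kappa>}. c < g) \<and> (\<forall>ba<g. \<exists>c\<in>{x. b < x \<and> x < \<kappa>}. ba < c \<and> c < g)"
      thus "g \<in> {x. b < x \<and> x < \<kappa>}" by auto
    qed auto
    thus ?thesis using stat by blast
  qed
  define z :: 'a where "z = (LEAST x. True)"
  define f where "f = (\<lambda>\<alpha>. \<lambda>a. if a \<in> A then (if \<alpha> < a then \<alpha> else z) else undefined)"
  have fP: "f \<alpha> \<in> prodA A" for \<alpha>
  proof -
    have "z < a" if "a \<in> A" for a
    proof -
      have "infinite {x. x < a}" using assms(4) that unfolding regular_def by auto
      then obtain x where "x < a" by (metis Collect_empty_eq finite.emptyI)
      moreover have "(LEAST x. True) \<le> x" by (rule Least_le) simp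
      ultimately show ?thesis unfolding z_def by (rule le_less_trans[rotated])
    qed
    thus ?thesis unfolding prodA_def f_def by auto
  qed
  define F where "F = f ` {x. x < \<kappa>}"
  have inj: "inj_on f {x. x < \<kappa>}"
  proof (rule inj_onI)
    fix \<alpha> \<beta> assume a: "\<alpha> \<in> {x. x < \<kappa>}" "\<beta> \<in> {x. x < \<kappa>}" "f \<alpha> = f \<beta>"
    have "max \<alpha> \<beta> < \<kappa>" using a by simp
    then obtain a where "a \<in> A" "max \<alpha> \<beta> < a" using Aunb by blast
    hence "\<alpha> < a" "\<beta> < a" by simp_all
    hence "f \<alpha> a = \<alpha>" "f \<beta> a = \<beta>" unfolding f_def using \<open>a \<in> A\<close> by simp_all
    thus "\<alpha> = \<beta>" using a(3) by metis
  qed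
  have Fk: "F \<approx> {x. x < \<kappa>}" unfolding F_def using inj inj_on_image_eqpoll_self by blast
  have unbd: "\<not> bounded_in A G" if G: "G \<subseteq> F" "G \<approx> {x. x < \<kappa>}" for G
  proof
    assume "bounded_in A G"
    then obtain g where g: "g \<in> prodA A" "\<forall>h\<in>G. \<forall>a\<in>A. h a < g a" unfolding bounded_in_def by blast
    define X where "X = {\<alpha>. \<alpha> < \<kappa> \<and> f \<alpha> \<in> G}"
    have GX: "G = f ` X" using G(1) unfolding X_def F_def by auto
    have Xunb: "\<forall>b<\<kappa>. \<exists>x\<in>X. b \<le> x"
    proof (rule ccontr)
      assume "\<not> ?thesis"
      then obtain b where b: "b < \<kappa>" "\<forall>x\<in>X. x < b" by (meson not_le)
      have "{x. x < \<kappa>} \<lesssim> {x. x < b}"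
      proof -
        have "{x. x < \<kappa>} \<lesssim> G" using G(2) eqpoll_sym eqpoll_imp_lepoll by blast
        also have "G \<lesssim> X" unfolding GX by (rule image_lepoll)
        also have "X \<lesssim> {x. x < b}" using b by (intro subset_imp_lepoll) auto
        finally show ?thesis .
      qed
      moreover have "{x. x < b} \<lesssim> {x. x < \<kappa>}" using b by (intro subset_imp_lepoll) auto
      ultimately have "{x. x < b} \<approx> {x. x < \<kappa>}" by (simp add: lepoll_antisym)
      thus False using card b unfolding is_cardinal_def by blast
    qed
    have "club \<kappa> {\<gamma>. \<gamma> < \<kappa> \<and> (\<forall>b<\<gamma>. \<exists>x\<in>X. b \<le> x \<and> x < \<gamma>)}"
      by (rule limit_club[OF reg unc _ Xunb]) (auto simp: X_def)
    then obtain a where a: "a \<in> A" "\<forall>b<a. \<exists>x\<in>X. b \<le> x \<and> x < a" using stat by blast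
    have "g a < a" using g(1) a(1) unfolding prodA_def by auto
    then obtain x where x: "x \<in> X" "g a \<le> x" "x < a" using a by blast
    have "f x a = x" using x a unfolding f_def by auto
    moreover have "f x a < g a" using g(2) x(1) a(1) unfolding X_def by auto
    ultimately show False using x by auto
  qed
  show ?thesis unfolding spec_def
    using reg Fk unbd fP unfolding F_def by blast
qed

end
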